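(* Consider the battery cost-minimization problem described in the context, with fixed data $t_0, T, K, Z, T_c, D$, $C_{\mathrm{ref}}\ge 0$, and let $S_1,S_2,S_3$ be the sets defined in the context. Suppose that at least one of the following holds: (i) $t_0 \in S_1$; or (ii) $S_3$ is empty; or (iii) $t_0 \notin S_1$ (equivalently $t_0\in S_2\cup S_3$), $S_3$ is nonempty, $S_1$ is nonempty, and there exists $t_1 \in S_1$ such that $t_1 < t_3$ for all $t_3 \in S_3$. Then either there is no feasible control, or the only feasible control is $u(t)=0$ for all $t\in[t_0,t_0+T]$.
   Context: Data: a time interval $[t_0,t_0+T]$ with $T>0$; a PV power profile $P_{\mathrm{pv}}(t)\ge 0$ and a (piecewise continuous) load profile $P_{\mathrm{load}}(t)$ on this interval; a time-of-use price $C_g(t)\ge 0$; constants $0<\eta_{\mathrm{pv}}\le 1$, $0<\eta_B\le 1$, $K>0$, $Z>0$, $T_c>0$, $D>0$, and a battery capacity $C_{\mathrm{ref}}\ge 0$. A control is a function $u$ on $[t_0,t_0+T]$; it determines states $E_B(t)$ (battery charge) and $\Delta C(t)$ (cumulative capacity loss) via $E_B(t_0)=0$, $\Delta C(t_0)=0$, $\frac{dE_B}{dt}=u(t)/\eta_B$ if $u(t)<0$ and $\frac{dE_B}{dt}=\eta_B u(t)$ otherwise; $\frac{d\Delta C}{dt}=-Z u(t)/\eta_B$ if $u(t)<0$ and $\frac{d\Delta C}{dt}=0$ otherwise. A control is feasible if for all $t\in[t_0,t_0+T]$: $E_B(t)\ge 0$; $E_B(t)+\Delta C(t)\le C_{\mathrm{ref}}$;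 $\eta_B u(t) T_c+\Delta C(t)\le C_{\mathrm{ref}}$ whenever $u(t)>0$; $-\frac{u(t)}{\eta_B}T_c+\Delta C(t)\le C_{\mathrm{ref}}$ whenever $u(t)<0$; and $P_{\mathrm{load}}(t)-\eta_{\mathrm{pv}}P_{\mathrm{pv}}(t)+u(t)\le D$. The cost of a feasible control is $\int_{t_0}^{t_0+T} C_g(\tau)\big(P_{\mathrm{load}}(\tau)-\eta_{\mathrm{pv}}P_{\mathrm{pv}}(\tau)+u(\tau)\big)\,d\tau + K\,\Delta C(t_0+T)$. Define $S_1=\{t\in[t_0,t_0+T] : D+\eta_{\mathrm{pv}}P_{\mathrm{pv}}(t)-P_{\mathrm{load}}(t)<0\}$, $S_2=\{t\in[t_0,t_0+T] : D+\eta_{\mathrm{pv}}P_{\mathrm{pv}}(t)-P_{\mathrm{load}}(t)=0\}$, $S_3=\{t\in[t_0,t_0+T] : D+\eta_{\mathrm{pv}}P_{\mathrm{pv}}(t)-P_{\mathrm{load}}(t)>0\}$. *)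

theory Defs
  imports "HOL-Analysis.Analysis"
begin

definition piecewise_continuous_on :: "real \<Rightarrow> real \<Rightarrow> (real \<Rightarrow> real) \<Rightarrow> bool" where
  "piecewise_continuous_on a b f \<longleftrightarrow>
     (\<exists>S. finite S \<and> continuous_on ({a..b} - S) f \<and>
        (\<forall>s\<in>S \<inter> {a..b}.
           (s < b \<longrightarrow> (\<exists>l. (f \<longlongrightarrow> l) (at_right s))) \<and>
           (a < s \<longrightarrow> (\<exists>l. (f \<longlongrightarrow> l) (at_left s)))))"

definition EB_rate :: "real \<Rightarrow> real \<Rightarrow> real" where
  "EB_rate etaB v = (if v < 0 then v / etaB else etaB * v)"

definition DC_rate :: "real \<Rightarrow> real \<Rightarrow> real \<Rightarrow> real" where
  "DC_rate Z etaB v = (if v < 0 then - Z * v / etaB else 0)"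

text \<open>Solutions of the state equations with E_B(t0) = 0, Delta C(t0) = 0.\<close>
definition E_B :: "real \<Rightarrow> real \<Rightarrow> (real \<Rightarrow> real) \<Rightarrow> real \<Rightarrow> real" where
  "E_B etaB t0 u t = integral {t0..t} (\<lambda>\<tau>. EB_rate etaB (u \<tau>))"

definition Delta_C :: "real \<Rightarrow> real \<Rightarrow> real \<Rightarrow> (real \<Rightarrow> real) \<Rightarrow> real \<Rightarrow> real" where
  "Delta_C Z etaB t0 u t = integral {t0..t} (\<lambda>\<tau>. DC_rate Z etaB (u \<tau>))"

definition feasible ::
  "real \<Rightarrow> real \<Rightarrow> (real \<Rightarrow> real) \<Rightarrow> (real \<Rightarrow> real) \<Rightarrow> real \<Rightarrow> real \<Rightarrow> real \<Rightarrow> real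
   \<Rightarrow> real \<Rightarrow> real \<Rightarrow> (real \<Rightarrow> real) \<Rightarrow> bool" where
  "feasible t0 T Ppv Pload etapv etaB Z Tc D Cref u \<longleftrightarrow>
     continuous_on {t0..t0+T} u \<and>
     (\<forall>t\<in>{t0..t0+T}.
        E_B etaB t0 u t \<ge> 0 \<and>
        E_B etaB t0 u t + Delta_C Z etaB t0 u t \<le> Cref \<and>
        (u t > 0 \<longrightarrow> etaB * u t * Tc + Delta_C Z etaB t0 u t \<le> Cref) \<and>
        (u t < 0 \<longrightarrow> - (u t / etaB) * Tc + Delta_C Z etaB t0 u t \<le> Cref) \<and>
        Pload t - etapv * Ppv t + u t \<le> D)"

definition cost ::
  "real \<Rightarrow> real \<Rightarrow> (real \<Rightarrow> real) \<Rightarrow> (real \<Rightarrow> real) \<Rightarrow> (real \<Rightarrow> real) \<Rightarrow> real \<Rightarrow> real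
   \<Rightarrow> real \<Rightarrow> real \<Rightarrow> (real \<Rightarrow> real) \<Rightarrow> real" where
  "cost t0 T Ppv Pload Cg etapv etaB K Z u =
     integral {t0..t0+T} (\<lambda>\<tau>. Cg \<tau> * (Pload \<tau> - etapv * Ppv \<tau> + u \<tau>))
     + K * Delta_C Z etaB t0 u (t0 + T)"

definition S1 :: "real \<Rightarrow> real \<Rightarrow> (real \<Rightarrow> real) \<Rightarrow> (real \<Rightarrow> real) \<Rightarrow> real \<Rightarrow> real \<Rightarrow> real set" where
  "S1 t0 T Ppv Pload etapv D = {t\<in>{t0..t0+T}. D + etapv * Ppv t - Pload t < 0}"
definition S2 :: "real \<Rightarrow> real \<Rightarrow> (real \<Rightarrow> real) \<Rightarrow> (real \<Rightarrow> real) \<Rightarrow> real \<Rightarrow> real \<Rightarrow> real set" where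
  "S2 t0 T Ppv Pload etapv D = {t\<in>{t0..t0+T}. D + etapv * Ppv t - Pload t = 0}"
definition S3 :: "real \<Rightarrow> real \<Rightarrow> (real \<Rightarrow> real) \<Rightarrow> (real \<Rightarrow> real) \<Rightarrow> real \<Rightarrow> real \<Rightarrow> real set" where
  "S3 t0 T Ppv Pload etapv D = {t\<in>{t0..t0+T}. D + etapv * Ppv t - Pload t > 0}"

end

theory Submission
  imports Defs
begin

lemma key:
  fixes u :: "real \<Rightarrow> real"
  assumes f: "feasible t0 T Ppv Pload etapv etaB Z Tc D Cref u"
    and eta: "0 < etaB" and s: "t0 < s" "s \<le> t0 + T"
    and le: "\<forall>t\<in>{t0..s}. u t \<le> 0"
  shows "\<forall>t\<in>{t0..s}. u t = 0"
proof -
  have cu: "continuous_on {t0..s} u"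
    using f s unfolding feasible_def by (auto intro: continuous_on_subset)
  have "E_B etaB t0 u s \<ge> 0" using f s unfolding feasible_def by auto
  moreover have "E_B etaB t0 u s = integral {t0..s} (\<lambda>\<tau>. u \<tau> / etaB)"
    unfolding E_B_def
  proof (rule integral_cong)
    fix x assume "x \<in> {t0..s}"
    then have "u x \<le> 0" using le by auto
    then show "EB_rate etaB (u x) = u x / etaB"
      unfolding EB_rate_def by (cases "u x < 0") auto
  qed
  moreover have "integral {t0..s} (\<lambda>\<tau>. u \<tau> / etaB) = - (integral {t0..s} (\<lambda>\<tau>. - u \<tau> / etaB))"
    by (simp add: integral_neg[symmetric])
  ultimately have i: "integral {t0..s} (\<lambda>\<tau>. - u \<tau> / etaB) \<le> 0" by linarith
  have c2: "continuous_on {t0..s} (\<lambda>\<tau>. - u \<tau> / etaB)"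
    by (intro continuous_intros cu) (use eta in auto)
  have nn: "\<And>x. x \<in> {t0..s} \<Longrightarrow> - u x / etaB \<ge> 0"
    using le eta by (auto simp: divide_nonpos_pos)
  have "integral {t0..s} (\<lambda>\<tau>. - u \<tau> / etaB) \<ge> 0"
    using integral_nonneg[OF integrable_continuous_interval[OF c2] nn] by simp
  with i have "integral {t0..s} (\<lambda>\<tau>. - u \<tau> / etaB) = 0" by linarith
  with integral_eq_0_iff[OF c2 s(1) nn] have "\<forall>x\<in>{t0..s}. - u x / etaB = 0" by blast
  then show ?thesis using eta by auto
qed

theorem proposition1:
  fixes t0 T etapv etaB K Z Tc D Cref :: real
    and Ppv Pload Cg :: "real \<Rightarrow> real"
  assumes "T > 0"
    and "\<forall>t\<in>{t0..t0+T}. Ppv t \<ge> 0"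
    and "piecewise_continuous_on t0 (t0+T) Pload"
    and "\<forall>t\<in>{t0..t0+T}. Cg t \<ge> 0"
    and "0 < etapv" "etapv \<le> 1" "0 < etaB" "etaB \<le> 1"
    and "K > 0" "Z > 0" "Tc > 0" "D > 0" "Cref \<ge> 0"
    and "t0 \<in> S1 t0 T Ppv Pload etapv D
         \<or> S3 t0 T Ppv Pload etapv D = {}
         \<or> (t0 \<notin> S1 t0 T Ppv Pload etapv D \<and> S3 t0 T Ppv Pload etapv D \<noteq> {}
            \<and> S1 t0 T Ppv Pload etapv D \<noteq> {}
            \<and> (\<exists>t1\<in>S1 t0 T Ppv Pload etapv D. \<forall>t3\<in>S3 t0 T Ppv Pload etapv D. t1 < t3))"
  shows "(\<not> (\<exists>u. feasible t0 T Ppv Pload etapv etaB Z Tc D Cref u))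
         \<or> (feasible t0 T Ppv Pload etapv etaB Z Tc D Cref (\<lambda>_. 0)
            \<and> (\<forall>u. feasible t0 T Ppv Pload etapv etaB Z Tc D Cref u
                   \<longrightarrow> (\<forall>t\<in>{t0..t0+T}. u t = 0)))"
  proof -
  let ?S1 = "S1 t0 T Ppv Pload etapv D" and ?S3 = "S3 t0 T Ppv Pload etapv D"
  have main: "feasible t0 T Ppv Pload etapv etaB Z Tc D Cref u \<Longrightarrow> ?S3 = {} \<and> (\<forall>t\<in>{t0..t0+T}. u t = 0)" for u
  proof -
    assume f: "feasible t0 T Ppv Pload etapv etaB Z Tc D Cref u"
    have cu: "continuous_on {t0..t0+T} u" using f unfolding feasible_def by auto
    have ub: "\<And>t. t \<in> {t0..t0+T} \<Longrightarrow> u t \<le> D + etapv * Ppv t - Pload t"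
      using f unfolding feasible_def by fastforce
    have neg1: "\<And>t. t \<in> ?S1 \<Longrightarrow> u t < 0"
      using ub unfolding S1_def by fastforce
    have le3: "\<And>t. t \<in> {t0..t0+T} \<Longrightarrow> t \<notin> ?S3 \<Longrightarrow> u t \<le> 0"
      using ub unfolding S3_def by fastforce
    consider (i) "t0 \<in> ?S1" | (ii) "?S3 = {}" | (iii) "t0 \<notin> ?S1" "\<exists>t1\<in>?S1. \<forall>t3\<in>?S3. t1 < t3"
      using assms(14) by blast
    then show ?thesis
    proof cases
      case i
      have "u t0 < 0" using neg1 i by blast
      have t0in: "t0 \<in> {t0..t0+T}" using assms(1) by auto
      have "isCont u t0 \<or> True" by simp
      have "\<exists>d>0. \<forall>x\<in>{t0..t0+T}. dist x t0 < d \<longrightarrow> dist (u x) (u t0) < - u t0"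
        using cu t0in \<open>u t0 < 0\<close> unfolding continuous_on_iff by auto
      then obtain d where d: "d > 0" "\<forall>x\<in>{t0..t0+T}. dist x t0 < d \<longrightarrow> dist (u x) (u t0) < - u t0"
        by blast
      define s where "s = t0 + min (d/2) T"
      have s: "t0 < s" "s \<le> t0 + T" using d assms(1) by (auto simp: s_def)
      have "\<forall>t\<in>{t0..s}. u t \<le> 0"
      proof
        fix t assume t: "t \<in> {t0..s}"
        then have "t \<in> {t0..t0+T}" "dist t t0 < d" using s d by (auto simp: s_def dist_real_def)
        then have "dist (u t) (u t0) < - u t0" using d by blast
        then show "u t \<le> 0" by (auto simp: dist_real_def)
      qed
      from key[OF f assms(7) s this] have "u t0 = 0" using s by auto
      with \<open>u t0 < 0\<close> show ?thesis by simp
    next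
      case ii
      have "\<forall>t\<in>{t0..t0+T}. u t \<le> 0" using le3 ii by blast
      from key[OF f assms(7) _ _ this] assms(1) ii show ?thesis by auto
    next
      case iii
      then obtain t1 where t1: "t1 \<in> ?S1" "\<forall>t3\<in>?S3. t1 < t3" by blast
      have t1i: "t1 \<in> {t0..t0+T}" using t1 unfolding S1_def by auto
      with iii(1) t1(1) have "t0 < t1" by (cases "t0 = t1") auto
      have "\<forall>t\<in>{t0..t1}. u t \<le> 0"
      proof
        fix t assume t: "t \<in> {t0..t1}"
        then have "t \<notin> ?S3" using t1(2) by force
        then show "u t \<le> 0" using le3 t t1i by auto
      qed
      from key[OF f assms(7) \<open>t0 < t1\<close> _ this] t1i have "u t1 = 0" using \<open>t0 < t1\<close> by auto
      with neg1[OF t1(1)] show ?thesis by simp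
    qed
  qed
  show ?thesis
  proof (cases "\<exists>u. feasible t0 T Ppv Pload etapv etaB Z Tc D Cref u")
    case False then show ?thesis by blast
  next
    case True
    then obtain u where f: "feasible t0 T Ppv Pload etapv etaB Z Tc D Cref u" by blast
    from main[OF f] have u0: "\<forall>t\<in>{t0..t0+T}. u t = 0" by blast
    have EB0: "E_B etaB t0 (\<lambda>_. 0) t = 0" for t unfolding E_B_def EB_rate_def by simp
    have DC0: "Delta_C Z etaB t0 (\<lambda>_. 0) t = 0" for t unfolding Delta_C_def DC_rate_def by simp
    have "feasible t0 T Ppv Pload etapv etaB Z Tc D Cref (\<lambda>_. 0)"
      unfolding feasible_def EB0 DC0 using f u0 assms(13) unfolding feasible_def by auto
    moreover have "\<forall>v. feasible t0 T Ppv Pload etapv etaB Z Tc D Cref v \<longrightarrow> (\<forall>t\<in>{t0..t0+T}. v t = 0)"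
      using main by blast
    ultimately show ?thesis by blast
  qed
qed

end
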